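(* Let $n\ge 2$. The function $\mathbf{H}:[0,1]^n\to[0,1]$ has no neutral element, i.e. there is no $e\in[0,1]$ such that $\mathbf{H}(e,\dots,e,t,e,\dots,e)=t$ for every $t\in[0,1]$ placed at any coordinate.
   Context: For $\mathbf{x}\in[0,1]^n$ let $x_{(1)}\ge\dots\ge x_{(n)}$ be its entries in decreasing order, and define the median $Med(\mathbf{x})=\frac12(x_{(k)}+x_{(k+1)})$ if $n=2k$ and $Med(\mathbf{x})=x_{(k+1)}$ if $n=2k+1$. Define $f_i(\mathbf{x})=\frac1n$ if $x_1=\dots=x_n$, and otherwise $f_i(\mathbf{x})=\frac{1}{n-1}\Big(1-\frac{|x_i-Med(\mathbf{x})|}{\sum_{j=1}^n|x_j-Med(\mathbf{x})|}\Big)$. Then $\mathbf{H}(\mathbf{x})=\sum_{i=1}^n f_i(\mathbf{x})\,x_i$. *)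

theory Defs
  imports Complex_Main
begin

text \<open>Vectors in [0,1]^n are represented as functions x :: nat => real,
  with coordinates x 0, ..., x (n-1) (coordinate i of the paper is x (i-1)).\<close>

text \<open>Entries in decreasing order: x_(j) = dec_order n x ! (j-1).\<close>
definition dec_order :: "nat \<Rightarrow> (nat \<Rightarrow> real) \<Rightarrow> real list" where
  "dec_order n x = rev (sort (map x [0..<n]))"

definition Med :: "nat \<Rightarrow> (nat \<Rightarrow> real) \<Rightarrow> real" where
  "Med n x = (let ds = dec_order n x; k = n div 2 in
     if even n then (ds ! (k - 1) + ds ! k) / 2 else ds ! k)"

definition fw :: "nat \<Rightarrow> (nat \<Rightarrow> real) \<Rightarrow> nat \<Rightarrow> real" where
  "fw n x i = (if (\<forall>j<n. x j = x 0) then 1 / real n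
     else (1 / (real n - 1)) *
          (1 - \<bar>x i - Med n x\<bar> / (\<Sum>j<n. \<bar>x j - Med n x\<bar>)))"

definition H :: "nat \<Rightarrow> (nat \<Rightarrow> real) \<Rightarrow> real" where
  "H n x = (\<Sum>i<n. fw n x i * x i)"

end

theory Submission
  imports Defs "HOL-Library.Multiset"
begin

lemma map_tail: "map (\<lambda>j. if j = 0 then t else e) [Suc 0..<Suc m] = replicate m e"
  by (rule nth_equalityI) (simp_all del: upt_Suc)

lemma dec_le:
  assumes "t \<le> e"
  shows "dec_order (Suc m) (\<lambda>j. if j = 0 then t else e) = replicate m e @ [t]"
proof -
  have "map (\<lambda>j. if j = 0 then t else e) [0..<Suc m] = t # replicate m e"
    by (simp add: upt_conv_Cons map_tail del: upt_Suc)
  moreover have "sort (t # replicate m e) = t # replicate m e"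
    using assms by (intro sorted_sort_id) (auto simp: sorted_append)
  ultimately show ?thesis by (simp add: dec_order_def)
qed

lemma dec_gt:
  assumes "e < t"
  shows "dec_order (Suc m) (\<lambda>j. if j = 0 then t else e) = t # replicate m e"
proof -
  have "map (\<lambda>j. if j = 0 then t else e) [0..<Suc m] = t # replicate m e"
    by (simp add: upt_conv_Cons map_tail del: upt_Suc)
  moreover have "sort (t # replicate m e) = replicate m e @ [t]"
    using assms by (intro properties_for_sort) (auto simp: sorted_append)
  ultimately show ?thesis by (simp add: dec_order_def)
qed

lemma dec_cases:
  "dec_order (Suc m) (\<lambda>j. if j = 0 then t else e) = replicate m e @ [t] \<or>
   dec_order (Suc m) (\<lambda>j. if j = 0 then t else e) = t # replicate m e"
  using dec_le dec_gt by (cases "t \<le> e") auto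

lemma med3:
  assumes "m \<ge> 2"
  shows "Med (Suc m) (\<lambda>j. if j = 0 then t else e) = e"
proof -
  let ?ds = "dec_order (Suc m) (\<lambda>j. if j = 0 then t else e)"
  have A: "?ds ! i = e" if "1 \<le> i" "i < m" for i
    using dec_cases[of m t e] that
    by (auto simp: nth_append nth_Cons split: nat.splits)
  show ?thesis
  proof (cases "even (Suc m)")
    case True
    then have "2 \<le> Suc m div 2" "Suc m div 2 < m" using assms by presburger+
    then show ?thesis using True A[of "Suc m div 2"] A[of "Suc m div 2 - 1"]
      by (simp add: Med_def Let_def)
  next
    case False
    then have "1 \<le> Suc m div 2" "Suc m div 2 < m" using assms by presburger+
    then show ?thesis using False A[of "Suc m div 2"]
      by (simp add: Med_def Let_def)
  qed
qed

lemma H_big: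
  assumes "m \<ge> 2" "t \<noteq> e"
  shows "H (Suc m) (\<lambda>j. if j = 0 then t else e) = e"
proof -
  let ?x = "\<lambda>j::nat. if j = 0 then t else e"
  have M: "Med (Suc m) ?x = e" using med3 assms by simp
  have nc: "\<not> (\<forall>j<Suc m. ?x j = ?x 0)" using assms by (auto intro!: exI[of _ 1])
  have S: "(\<Sum>j<Suc m. \<bar>?x j - e\<bar>) = \<bar>t - e\<bar>"
    by (simp add: sum.lessThan_Suc_shift del: sum.lessThan_Suc)
  have pos: "\<bar>t - e\<bar> \<noteq> 0" using assms by simp
  have f0: "fw (Suc m) ?x 0 = 0" using nc M S pos by (simp add: fw_def)
  have fs: "fw (Suc m) ?x (Suc i) = 1 / real m" for i using nc M S by (simp add: fw_def)
  have "H (Suc m) ?x = (\<Sum>i<Suc m. fw (Suc m) ?x i * ?x i)" by (simp add: H_def)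
  also have "\<dots> = fw (Suc m) ?x 0 * t + (\<Sum>i<m. fw (Suc m) ?x (Suc i) * e)"
    by (simp add: sum.lessThan_Suc_shift del: sum.lessThan_Suc)
  also have "\<dots> = real m * (1 / real m * e)" by (simp add: f0 fs)
  also have "\<dots> = e" using assms by simp
  finally show ?thesis .
qed

lemma H_two:
  assumes "t \<noteq> e"
  shows "H 2 (\<lambda>j. if j = 0 then t else e) = (t + e) / 2"
proof -
  let ?x = "\<lambda>j::nat. if j = 0 then t else e"
  have M: "Med 2 ?x = (t + e) / 2"
    using dec_cases[of 1 t e] by (auto simp: Med_def Let_def numeral_2_eq_2)
  have nc: "\<not> (\<forall>j<2. ?x j = ?x 0)" using assms by (auto intro!: exI[of _ 1])
  have a1: "\<bar>t - (t + e) / 2\<bar> = \<bar>t - e\<bar> / 2" by (simp add: abs_if field_simps)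
  have a2: "\<bar>e - (t + e) / 2\<bar> = \<bar>t - e\<bar> / 2" by (simp add: abs_if field_simps)
  have S0: "(\<Sum>j<2. \<bar>?x j - (t + e) / 2\<bar>) = \<bar>t - e\<bar>"
    by (simp add: numeral_2_eq_2 a1 a2)
  have S: "(\<Sum>j<2. \<bar>?x j - Med 2 ?x\<bar>) = \<bar>t - e\<bar>"
    unfolding M by (rule S0)
  have pos: "\<bar>t - e\<bar> \<noteq> 0" using assms by simp
  have f0: "fw 2 ?x 0 = 1/2" using nc S pos by (simp add: fw_def M a1)
  have f1: "fw 2 ?x (Suc 0) = 1/2" using nc S pos by (simp add: fw_def M a2)
  have "H 2 ?x = fw 2 ?x 0 * t + fw 2 ?x (Suc 0) * e" by (simp add: H_def numeral_2_eq_2)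
  also have "\<dots> = (t + e) / 2" by (simp add: f0 f1)
  finally show ?thesis .
qed
theorem proposition12:
  fixes n :: nat
  assumes "n \<ge> 2"
  shows "\<not> (\<exists>e\<in>{0..1::real}. \<forall>i<n. \<forall>t\<in>{0..1::real}.
             H n (\<lambda>j. if j = i then t else e) = t)"
proof
  assume "\<exists>e\<in>{0..1::real}. \<forall>i<n. \<forall>t\<in>{0..1::real}.
             H n (\<lambda>j. if j = i then t else e) = t"
  then obtain e :: real where e: "0 \<le> e" "e \<le> 1"
    and h: "\<And>t. t \<in> {0..1} \<Longrightarrow> H n (\<lambda>j. if j = 0 then t else e) = t"
    using assms by auto
  define t :: real where "t = (if e = 0 then 1 else 0)"
  have t: "t \<in> {0..1}" "t \<noteq> e" using e by (auto simp: t_def)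
  show False
  proof (cases "n = 2")
    case True
    then show ?thesis using h[OF t(1)] H_two[OF t(2)] t(2) by simp
  next
    case False
    define m where "m = n - 1"
    have "n = Suc m" "m \<ge> 2" using assms False by (auto simp: m_def)
    then show ?thesis using h[OF t(1)] H_big[of m t e] t(2) by simp
  qed
qed

end
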